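(* Let $n\ge1$. For every function $f(t)=\sum_{j=1}^na_je^{\lambda_jt}$ with $a_j,\lambda_j\in\mathbb{C}$ and $\mathrm{Re}(\lambda_j)<1/2$ for all $j$, $$\|f'\| \le \left(\max_{1\le j\le n}|\lambda_j| + \left(\sum_{j=1}^n\left(1-2\mathrm{Re}(\lambda_j)\right)\sum_{k=j+1}^n\left(1-2\mathrm{Re}(\lambda_k)\right)\right)^{1/2}\right)\|f\|,$$ where $\|g\|:=\left(\int_0^\infty|g(t)|^2e^{-t}\,dt\right)^{1/2}$. *)

theory Defs
  imports "HOL-Analysis.Analysis"
begin

definition wnorm :: "(real \<Rightarrow> complex) \<Rightarrow> real" where
  "wnorm g = sqrt (LINT t:{0..}|lborel. (cmod (g t))\<^sup>2 * exp (- t))"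

end

theory Submission
  imports Defs "HOL-Real_Asymp.Real_Asymp"
begin

lemma discr:
  fixes a b c :: real
  assumes "c \<ge> 0" "\<And>t. 0 \<le> a + 2 * t * b + t\<^sup>2 * c"
  shows "b\<^sup>2 \<le> a * c"
proof (cases "c = 0")
  case True
  show ?thesis
  proof (cases "b = 0")
    case False
    have "0 \<le> a + 2 * (-(a+1)/(2*b)) * b + (-(a+1)/(2*b))\<^sup>2 * c" by (rule assms(2))
    with True False show ?thesis by (simp add: field_simps)
  qed (use assms(2)[of 0] True in simp)
next
  case False
  then have c: "c > 0" using assms(1) by simp
  have "0 \<le> a + 2 * (-b/c) * b + (-b/c)\<^sup>2 * c" by (rule assms(2))
  then have "0 \<le> a - b\<^sup>2 / c" using c by (simp add: power2_eq_square field_simps)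
  then show ?thesis using c by (simp add: field_simps)
qed


lemma cs2:
  fixes A B a1 a2 b1 b2 :: real
  assumes "A \<ge> 0" "B \<ge> 0" "a1 \<ge> 0" "a2 \<ge> 0" "b1 \<ge> 0" "b2 \<ge> 0"
    "A\<^sup>2 \<le> a1 * b1" "B\<^sup>2 \<le> a2 * b2"
  shows "(A + B)\<^sup>2 \<le> (a1 + a2) * (b1 + b2)"
proof -
  have "(A*B)\<^sup>2 \<le> (a1*b1) * (a2*b2)"
    using assms by (simp add: power_mult_distrib mult_mono)
  also have "\<dots> = (a1*b2) * (a2*b1)" by simp
  finally have h1: "(A*B)\<^sup>2 \<le> (a1*b2) * (a2*b1)" .
  have e: "(a1*b2 + a2*b1)\<^sup>2 - 4*((a1*b2)*(a2*b1)) = (a1*b2 - a2*b1)\<^sup>2"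
    by (simp add: power2_eq_square algebra_simps)
  have "0 \<le> (a1*b2 - a2*b1)\<^sup>2" by simp
  have e2: "(2*(A*B))\<^sup>2 = 4*(A*B)\<^sup>2" by (simp add: power2_eq_square)
  have p: "(2*(A*B))\<^sup>2 \<le> (a1*b2 + a2*b1)\<^sup>2"
    using h1 e \<open>0 \<le> (a1*b2 - a2*b1)\<^sup>2\<close> unfolding e2 by linarith
  have "2*(A*B) \<le> a1*b2 + a2*b1"
    by (rule power2_le_imp_le[OF p]) (use assms in simp)
  then show ?thesis using assms by (simp add: power2_eq_square algebra_simps)
qed


lemma fin_ineq:
  fixes M s H x y :: real
  assumes "M \<ge> 0" "s \<ge> 0" "H \<ge> 0" "x \<ge> 0" "y \<ge> 0"
  shows "((M+s)*x + H*y)\<^sup>2 + M\<^sup>2*y\<^sup>2 \<le> (M + sqrt (s\<^sup>2+H\<^sup>2))\<^sup>2 * (x\<^sup>2+y\<^sup>2)"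
proof -
  define r where "r = sqrt (x\<^sup>2+y\<^sup>2)"
  define q where "q = sqrt (s\<^sup>2+H\<^sup>2)"
  define u where "u = s*x + H*y"
  have r2: "r\<^sup>2 = x\<^sup>2+y\<^sup>2" unfolding r_def by simp
  have q2: "q\<^sup>2 = s\<^sup>2+H\<^sup>2" unfolding q_def by simp
  have xr: "x \<le> r" unfolding r_def by (rule real_le_rsqrt) simp
  have u0: "u \<ge> 0" unfolding u_def using assms by simp
  have "u\<^sup>2 \<le> (s\<^sup>2+H\<^sup>2)*(x\<^sup>2+y\<^sup>2)"
    unfolding u_def using cs2[of "s*x" "H*y" "s\<^sup>2" "H\<^sup>2" "x\<^sup>2" "y\<^sup>2"] assms
    by (simp add: power_mult_distrib)
  also have "\<dots> = (q*r)\<^sup>2" by (simp add: power_mult_distrib q2 r2)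
  finally have uqr2: "u\<^sup>2 \<le> (q*r)\<^sup>2" .
  have qr0: "0 \<le> q*r" unfolding q_def r_def by simp
  have uqr: "u \<le> q*r" by (rule power2_le_imp_le[OF uqr2 qr0])
  have "((M+s)*x + H*y)\<^sup>2 + M\<^sup>2*y\<^sup>2 = M\<^sup>2*r\<^sup>2 + 2*M*x*u + u\<^sup>2"
    unfolding r2 u_def by (simp add: power2_eq_square algebra_simps)
  also have "\<dots> \<le> M\<^sup>2*r\<^sup>2 + 2*M*r*(q*r) + (q*r)\<^sup>2"
  proof -
    have r0: "0 \<le> r" unfolding r_def by simp
    have "x*u \<le> r*(q*r)" by (rule mult_mono[OF xr uqr r0 u0])
    then have "(2*M)*(x*u) \<le> (2*M)*(r*(q*r))" by (rule mult_left_mono) (use assms in simp)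
    then have "2*M*x*u \<le> 2*M*r*(q*r)" by (simp add: mult.assoc)
    with uqr2 show ?thesis by linarith
  qed
  also have "\<dots> = (M + q)\<^sup>2 * r\<^sup>2" by (simp add: power2_eq_square algebra_simps)
  finally show ?thesis unfolding q_def r2 .
qed


lemma sum_swap_tri:
  fixes w :: "nat \<Rightarrow> real"
  shows "(\<Sum>j=1..n. w j * (\<Sum>k=j+1..n. w k)) = (\<Sum>k=1..n. w k * (\<Sum>j=1..k-1. w j))"
proof (induction n)
  case 0 then show ?case by simp
next
  case (Suc n)
  have "(\<Sum>j=1..Suc n. w j * (\<Sum>k=j+1..Suc n. w k)) = (\<Sum>j=1..n. w j * (\<Sum>k=j+1..Suc n. w k))"
    by (simp add: sum.cl_ivl_Suc)
  also have "\<dots> = (\<Sum>j=1..n. w j * (\<Sum>k=j+1..n. w k) + w j * w (Suc n))"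
    by (intro sum.cong refl) (simp add: sum.cl_ivl_Suc algebra_simps)
  also have "\<dots> = (\<Sum>k=1..n. w k * (\<Sum>j=1..k-1. w j)) + (\<Sum>j=1..n. w j) * w (Suc n)"
    by (simp only: sum.distrib Suc.IH sum_distrib_right[symmetric])
  also have "\<dots> = (\<Sum>k=1..Suc n. w k * (\<Sum>j=1..k-1. w j))"
    by (simp add: sum.cl_ivl_Suc mult.commute)
  finally show ?case .
qed



lemma Ici_Ioi_AE:
  fixes f :: "real \<Rightarrow> 'b::{banach, second_countable_topology}"
  assumes [measurable]: "f \<in> borel_measurable lborel"
  shows "set_integrable lborel {0..} f \<longleftrightarrow> set_integrable lborel {0<..} f"
    and "(LINT t:{0..}|lborel. f t) = (LINT t:{0<..}|lborel. f t)"
proof -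
  have ae: "AE x in lborel. indicator {0..} x *\<^sub>R f x = indicator {0<..} x *\<^sub>R f x"
    using AE_lborel_singleton[of "0::real"]
    by eventually_elim (auto split: split_indicator)
  show "set_integrable lborel {0..} f \<longleftrightarrow> set_integrable lborel {0<..} f"
    unfolding set_integrable_def by (rule integrable_cong_AE) (use ae in auto)
  show "(LINT t:{0..}|lborel. f t) = (LINT t:{0<..}|lborel. f t)"
    unfolding set_lebesgue_integral_def by (rule integral_cong_AE) (use ae in auto)
qed

lemma set_integral_sum_fin:
  fixes f :: "'i \<Rightarrow> 'a \<Rightarrow> 'b::{banach, second_countable_topology}"
  assumes "\<And>i. i \<in> I \<Longrightarrow> set_integrable M A (f i)"
  shows "(LINT x:A|M. (\<Sum>i\<in>I. f i x)) = (\<Sum>i\<in>I. LINT x:A|M. f i x)"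
    and "set_integrable M A (\<lambda>x. \<Sum>i\<in>I. f i x)"
proof -
  have e: "(\<lambda>x. indicator A x *\<^sub>R (\<Sum>i\<in>I. f i x)) = (\<lambda>x. \<Sum>i\<in>I. indicator A x *\<^sub>R f i x)"
    by (simp add: scaleR_sum_right)
  show "(LINT x:A|M. (\<Sum>i\<in>I. f i x)) = (\<Sum>i\<in>I. LINT x:A|M. f i x)"
    unfolding set_lebesgue_integral_def e
    using Bochner_Integration.integral_sum[where I=I and M=M and f="\<lambda>i x. indicator A x *\<^sub>R f i x"] assms by (simp add: set_integrable_def)
  show "set_integrable M A (\<lambda>x. \<Sum>i\<in>I. f i x)"
    unfolding set_integrable_def e
    by (rule Bochner_Integration.integrable_sum) (use assms in \<open>auto simp: set_integrable_def\<close>)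
qed

lemma dexp: fixes c :: complex shows "((\<lambda>t::real. exp (c * of_real t)) has_vector_derivative (c * exp (c * of_real t))) (at t)"
proof -
  have e: "\<And>t. c * of_real t = t *\<^sub>R c" by (simp add: scaleR_conv_of_real mult.commute)
  show ?thesis unfolding e by (rule exp_scaleR_has_vector_derivative_left)
qed

lemma exp_int:
  fixes \<mu> :: complex
  assumes "Re \<mu> < 0"
  shows "set_integrable lborel {0..} (\<lambda>t. exp (\<mu> * of_real t))"
    and "(LINT t:{0..}|lborel. exp (\<mu> * of_real t)) = - 1 / \<mu>"
proof -
  have mu0: "\<mu> \<noteq> 0" using assms by auto
  have meas[measurable]: "(\<lambda>t::real. exp (\<mu> * of_real t)) \<in> borel_measurable lborel"
    by measurable
  have r: "set_integrable lborel (einterval (ereal 0) \<infinity>) (\<lambda>t. exp (Re \<mu> * t))"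
  proof (rule interval_integral_FTC_nonneg(1)[where F = "\<lambda>t. exp (Re \<mu> * t) / Re \<mu>" and A = "1 / Re \<mu>" and B = 0])
    show "\<And>x. DERIV (\<lambda>t. exp (Re \<mu> * t) / Re \<mu>) x :> exp (Re \<mu> * x)"
      using assms by (auto intro!: derivative_eq_intros)
    show "(((\<lambda>t. exp (Re \<mu> * t) / Re \<mu>) \<circ> real_of_ereal) \<longlongrightarrow> 1 / Re \<mu>) (at_right (ereal 0))"
      unfolding ereal_tendsto_simps using assms
      by (auto intro!: tendsto_eq_intros)
    show "(((\<lambda>t. exp (Re \<mu> * t) / Re \<mu>) \<circ> real_of_ereal) \<longlongrightarrow> 0) (at_left \<infinity>)"
      unfolding ereal_tendsto_simps using assms
      by real_asymp
  qed (auto intro!: continuous_intros)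
  have ri: "set_integrable lborel {0<..} (\<lambda>t. exp (\<mu> * of_real t))"
    apply (rule set_integrable_bound[OF r[simplified]])
    by (auto simp: set_borel_measurable_def norm_exp)
  then show "set_integrable lborel {0..} (\<lambda>t. exp (\<mu> * of_real t))"
    using Ici_Ioi_AE(1)[OF meas] by simp
  have "(LINT t:{0<..}|lborel. exp (\<mu> * of_real t)) = (LBINT t=ereal 0..\<infinity>. exp (\<mu> * of_real t))"
    by (simp add: interval_integral_to_infinity_eq)
  also have "\<dots> = 0 - 1/\<mu>"
  proof (rule interval_integral_FTC_integrable[where F = "\<lambda>t. exp (\<mu> * of_real t) / \<mu>"])
    show "\<And>x. ((\<lambda>t. exp (\<mu> * of_real t) / \<mu>) has_vector_derivative exp (\<mu> * of_real x)) (at x)"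
      using has_vector_derivative_divide[OF dexp[of \<mu>], where a = \<mu>] mu0 by simp
    show "set_integrable lborel (einterval (ereal 0) \<infinity>) (\<lambda>t. exp (\<mu> * of_real t))"
      using ri by simp
    show "(((\<lambda>t. exp (\<mu> * of_real t) / \<mu>) \<circ> real_of_ereal) \<longlongrightarrow> 1 / \<mu>) (at_right (ereal 0))"
      unfolding ereal_tendsto_simps
      by (auto intro!: tendsto_eq_intros simp: mu0)
    show "(((\<lambda>t. exp (\<mu> * of_real t) / \<mu>) \<circ> real_of_ereal) \<longlongrightarrow> 0) (at_left \<infinity>)"
      unfolding ereal_tendsto_simps
    proof -
      have "((\<lambda>t. exp (Re \<mu> * t)) \<longlongrightarrow> 0) at_top"
        using assms by real_asymp
      from tendsto_divide_zero[OF this, of "cmod \<mu>"]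
      have "((\<lambda>t. exp (Re \<mu> * t) / cmod \<mu>) \<longlongrightarrow> 0) at_top" .
      then show "((\<lambda>t. exp (\<mu> * of_real t) / \<mu>) \<longlongrightarrow> 0) at_top"
        by (subst tendsto_norm_zero_iff[symmetric]) (simp add: norm_divide norm_exp)
    qed
  qed (auto intro!: continuous_intros)
  finally show "(LINT t:{0..}|lborel. exp (\<mu> * of_real t)) = - 1 / \<mu>"
    using Ici_Ioi_AE(2)[OF meas] by simp
qed
definition vadd :: "(nat \<Rightarrow> complex) \<Rightarrow> (nat \<Rightarrow> complex) \<Rightarrow> nat \<Rightarrow> complex" where
  "vadd x y = (\<lambda>j. x j + y j)"
definition vsc :: "complex \<Rightarrow> (nat \<Rightarrow> complex) \<Rightarrow> nat \<Rightarrow> complex" where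
  "vsc a x = (\<lambda>j. a * x j)"
lemma vadd_apply[simp]: "vadd x y j = x j + y j" by (simp add: vadd_def)
lemma vsc_apply[simp]: "vsc a x j = a * x j" by (simp add: vsc_def)

locale expsys =
  fixes n :: nat and lam :: "nat \<Rightarrow> complex"
  assumes re: "\<And>j. j \<in> {1..n} \<Longrightarrow> Re (lam j) < 1/2"
begin

definition G :: "nat \<Rightarrow> nat \<Rightarrow> complex" where "G j k = 1 / (1 - lam j - cnj (lam k))"
definition ip :: "(nat \<Rightarrow> complex) \<Rightarrow> (nat \<Rightarrow> complex) \<Rightarrow> complex" where
  "ip c d = (\<Sum>j\<in>{1..n}. \<Sum>k\<in>{1..n}. c j * cnj (d k) * G j k)"
definition Q where "Q c = Re (ip c c)"
definition D :: "(nat \<Rightarrow> complex) \<Rightarrow> nat \<Rightarrow> complex" where "D c = (\<lambda>j. lam j * c j)"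
definition ev :: "(nat \<Rightarrow> complex) \<Rightarrow> complex" where "ev c = (\<Sum>j\<in>{1..n}. c j)"
definition V :: "nat \<Rightarrow> (nat \<Rightarrow> complex) set" where "V m = {c. \<forall>j. j \<notin> {1..m} \<longrightarrow> c j = 0}"

definition F :: "(nat \<Rightarrow> complex) \<Rightarrow> real \<Rightarrow> complex" where
  "F c t = (\<Sum>j\<in>{1..n}. c j * exp (lam j * of_real t))"

lemma G_alt: "G j k = - 1 / (lam j + cnj (lam k) - 1)"
  unfolding G_def by (simp add: divide_simps algebra_simps)

lemma ip_add1: "ip (vadd x y) d = ip x d + ip y d"
  unfolding ip_def by (simp add: distrib_right sum.distrib)
lemma ip_add2: "ip d (vadd x y) = ip d x + ip d y"
  unfolding ip_def by (simp add: distrib_right distrib_left sum.distrib)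
lemma ip_sc1: "ip (vsc a x) d = a * ip x d"
  unfolding ip_def by (simp add: sum_distrib_left mult.assoc)
lemma ip_sc2: "ip d (vsc a x) = cnj a * ip d x"
  unfolding ip_def by (simp add: sum_distrib_left algebra_simps)

lemma G_cnj: "cnj (G j k) = G k j"
  unfolding G_def by (simp add: algebra_simps)

lemma ip_sym: "cnj (ip c d) = ip d c"
  unfolding ip_def apply (simp add: cnj_sum G_cnj algebra_simps)
  by (rule sum.swap)

lemma ip_real: "ip c c = of_real (Q c)"
proof -
  have "cnj (ip c c) = ip c c" by (rule ip_sym)
  then show ?thesis unfolding Q_def by (metis Reals_cnj_iff complex_is_Real_iff of_real_Re)
qed

lemma G_key: "j \<in> {1..n} \<Longrightarrow> k \<in> {1..n} \<Longrightarrow> (lam j + cnj (lam k)) * G j k = G j k - 1"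
proof -
  assume a: "j \<in> {1..n}" "k \<in> {1..n}"
  have h: "Re (1 - lam j - cnj (lam k)) > 0" using re[OF a(1)] re[OF a(2)] by simp
  have nz: "1 - lam j - cnj (lam k) \<noteq> 0"
  proof
    assume "1 - lam j - cnj (lam k) = 0"
    then have "Re (1 - lam j - cnj (lam k)) = 0" by simp
    with h show False by simp
  qed
  show ?thesis unfolding G_def using nz by (simp add: field_simps)
qed

lemma lyap: "ip (D c) d + ip c (D d) = ip c d - ev c * cnj (ev d)"
proof -
  have "ip (D c) d + ip c (D d) = (\<Sum>j\<in>{1..n}. \<Sum>k\<in>{1..n}. c j * cnj (d k) * ((lam j + cnj (lam k)) * G j k))"
    unfolding ip_def D_def by (simp add: sum.distrib[symmetric] algebra_simps)
  also have "\<dots> = (\<Sum>j\<in>{1..n}. \<Sum>k\<in>{1..n}. c j * cnj (d k) * G j k - c j * cnj (d k))"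
    by (intro sum.cong refl) (simp add: G_key right_diff_distrib)
  also have "\<dots> = ip c d - ev c * cnj (ev d)"
    unfolding ip_def ev_def by (simp add: sum_subtractf sum_product cnj_sum)
  finally show ?thesis .
qed

lemma int_F: "(LINT t:{0..}|lborel. (cmod (F c t))\<^sup>2 * exp (- t)) = Q c"
proof -
  have pt: "complex_of_real ((cmod (F c t))\<^sup>2 * exp (- t)) = (\<Sum>j\<in>{1..n}. \<Sum>k\<in>{1..n}. c j * cnj (c k) * exp ((lam j + cnj (lam k) - 1) * of_real t))" for t
  proof -
    have "complex_of_real ((cmod (F c t))\<^sup>2 * exp (- t)) = of_real ((cmod (F c t))\<^sup>2) * of_real (exp (- t))"
      by (rule of_real_mult)
    also have "\<dots> = F c t * cnj (F c t) * exp (- of_real t)"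
      by (simp only: complex_norm_square flip: exp_of_real) simp
    also have "\<dots> = (\<Sum>j\<in>{1..n}. \<Sum>k\<in>{1..n}. c j * exp (lam j * of_real t) * (cnj (c k) * exp (cnj (lam k) * of_real t)) * exp (- of_real t))"
      unfolding F_def cnj_sum sum_product sum_distrib_right by (simp add: exp_cnj sum_distrib_left sum_distrib_right)
    also have "\<dots> = (\<Sum>j\<in>{1..n}. \<Sum>k\<in>{1..n}. c j * cnj (c k) * exp ((lam j + cnj (lam k) - 1) * of_real t))"
    proof (intro sum.cong refl)
      fix j k
      have "exp ((lam j + cnj (lam k) - 1) * of_real t) = exp (lam j * of_real t) * exp (cnj (lam k) * of_real t) * exp (- of_real t)"
        by (simp add: algebra_simps flip: exp_add)
      then show "c j * exp (lam j * of_real t) * (cnj (c k) * exp (cnj (lam k) * of_real t)) * exp (- of_real t) = c j * cnj (c k) * exp ((lam j + cnj (lam k) - 1) * of_real t)"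
        by simp
    qed
    finally show ?thesis .
  qed
  have neg: "j \<in> {1..n} \<Longrightarrow> k \<in> {1..n} \<Longrightarrow> Re (lam j + cnj (lam k) - 1) < 0" for j k
    using re[of j] re[of k] by simp
  have "complex_of_real (LINT t:{0..}|lborel. (cmod (F c t))\<^sup>2 * exp (- t))
      = (LINT t:{0..}|lborel. complex_of_real ((cmod (F c t))\<^sup>2 * exp (- t)))"
    by (rule set_integral_complex_of_real[symmetric])
  also have "\<dots> = (LINT t:{0..}|lborel. (\<Sum>j\<in>{1..n}. \<Sum>k\<in>{1..n}. c j * cnj (c k) * exp ((lam j + cnj (lam k) - 1) * of_real t)))"
    by (simp only: pt)
  also have "\<dots> = (\<Sum>j\<in>{1..n}. \<Sum>k\<in>{1..n}. LINT t:{0..}|lborel. c j * cnj (c k) * exp ((lam j + cnj (lam k) - 1) * of_real t))"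
  proof -
    have i1: "set_integrable lborel {0..} (\<lambda>t. c j * cnj (c k) * exp ((lam j + cnj (lam k) - 1) * of_real t))"
      if "j \<in> {1..n}" "k \<in> {1..n}" for j k
      using exp_int(1)[OF neg[OF that]] by simp
    have i2: "set_integrable lborel {0..} (\<lambda>t. \<Sum>k\<in>{1..n}. c j * cnj (c k) * exp ((lam j + cnj (lam k) - 1) * of_real t))"
      if "j \<in> {1..n}" for j
      by (rule set_integral_sum_fin(2)) (use i1 that in auto)
    have "(LINT t:{0..}|lborel. (\<Sum>j\<in>{1..n}. \<Sum>k\<in>{1..n}. c j * cnj (c k) * exp ((lam j + cnj (lam k) - 1) * of_real t)))
      = (\<Sum>j\<in>{1..n}. LINT t:{0..}|lborel. (\<Sum>k\<in>{1..n}. c j * cnj (c k) * exp ((lam j + cnj (lam k) - 1) * of_real t)))"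
      by (rule set_integral_sum_fin(1)[OF i2])
    also have "\<dots> = (\<Sum>j\<in>{1..n}. \<Sum>k\<in>{1..n}. LINT t:{0..}|lborel. c j * cnj (c k) * exp ((lam j + cnj (lam k) - 1) * of_real t))"
      by (intro sum.cong refl set_integral_sum_fin(1) i1)
    finally show ?thesis .
  qed
  also have "\<dots> = (\<Sum>j\<in>{1..n}. \<Sum>k\<in>{1..n}. c j * cnj (c k) * G j k)"
    by (intro sum.cong refl) (simp add: exp_int(2)[OF neg] G_alt)
  also have "\<dots> = of_real (Q c)" using ip_real[of c] unfolding ip_def by simp
  finally show ?thesis by (simp only: of_real_eq_iff)
qed

lemma Q_nonneg: "Q c \<ge> 0"
  unfolding int_F[symmetric] set_lebesgue_integral_def
  by (intro integral_nonneg_AE AE_I2) (auto simp: indicator_def)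

end
context expsys begin

definition vsub :: "(nat \<Rightarrow> complex) \<Rightarrow> (nat \<Rightarrow> complex) \<Rightarrow> nat \<Rightarrow> complex" where
  "vsub x y = (\<lambda>j. x j - y j)"
lemma vsub_apply[simp]: "vsub x y j = x j - y j" by (simp add: vsub_def)

lemma ip_sub1: "ip (vsub x y) d = ip x d - ip y d"
  unfolding ip_def by (simp add: left_diff_distrib sum_subtractf)
lemma ip_sub2: "ip d (vsub x y) = ip d x - ip d y"
  unfolding ip_def by (simp add: left_diff_distrib right_diff_distrib sum_subtractf)

lemma ip_zero2: "ip c (\<lambda>_. 0) = 0" unfolding ip_def by simp

lemma Q_add: "Q (vadd x y) = Q x + 2 * Re (ip x y) + Q y"
proof -
  have "ip y x = cnj (ip x y)" using ip_sym[of x y] by simp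
  then have "Re (ip y x) = Re (ip x y)" by simp
  then show ?thesis unfolding Q_def by (simp add: ip_add1 ip_add2)
qed

lemma Q_sc: "Q (vsc a x) = (cmod a)\<^sup>2 * Q x"
proof -
  have "ip (vsc a x) (vsc a x) = (a * cnj a) * ip x x" by (simp add: ip_sc1 ip_sc2)
  also have "\<dots> = of_real ((cmod a)\<^sup>2 * Q x)" by (simp add: complex_norm_square[symmetric] ip_real)
  finally show ?thesis unfolding Q_def by simp
qed

lemma CS: "(Re (ip x y))\<^sup>2 \<le> Q x * Q y"
proof (rule discr)
  show "0 \<le> Q y" by (rule Q_nonneg)
  fix t :: real
  have "0 \<le> Q (vadd x (vsc (of_real t) y))" by (rule Q_nonneg)
  also have "\<dots> = Q x + 2 * t * Re (ip x y) + t\<^sup>2 * Q y"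
    by (simp add: Q_add Q_sc ip_sc2)
  finally show "0 \<le> Q x + 2 * t * Re (ip x y) + t\<^sup>2 * Q y" .
qed

lemma null: "Q y = 0 \<Longrightarrow> ip x y = 0"
proof -
  assume q: "Q y = 0"
  have "(Re (ip x y))\<^sup>2 \<le> 0" using CS[of x y] q by simp
  then have r: "Re (ip x y) = 0" by simp
  have "(Re (ip x (vsc \<i> y)))\<^sup>2 \<le> 0" using CS[of x "vsc \<i> y"] q by (simp add: Q_sc)
  then have "Re (ip x (vsc \<i> y)) = 0" by simp
  then have "Im (ip x y) = 0" by (simp add: ip_sc2)
  with r show ?thesis by (simp add: complex_eq_iff)
qed

lemma Re_ip_le: "Re (ip x y) \<le> sqrt (Q x) * sqrt (Q y)"
proof -
  have h: "(Re (ip x y))\<^sup>2 \<le> (sqrt (Q x) * sqrt (Q y))\<^sup>2"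
    using CS[of x y] Q_nonneg[of x] Q_nonneg[of y] by (simp add: power_mult_distrib)
  show ?thesis by (rule power2_le_imp_le[OF h]) (simp add: Q_nonneg)
qed

lemma sqrt_Q_add: "sqrt (Q (vadd x y)) \<le> sqrt (Q x) + sqrt (Q y)"
proof -
  have "Q (vadd x y) \<le> (sqrt (Q x) + sqrt (Q y))\<^sup>2"
    using Re_ip_le[of x y] Q_nonneg[of x] Q_nonneg[of y]
    by (simp add: Q_add power2_sum)
  then have "sqrt (Q (vadd x y)) \<le> sqrt ((sqrt (Q x) + sqrt (Q y))\<^sup>2)" by (rule real_sqrt_le_mono)
  then show ?thesis using Q_nonneg[of x] Q_nonneg[of y] by simp
qed

lemma ev_add: "ev (vadd x y) = ev x + ev y" unfolding ev_def by (simp add: sum.distrib)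
lemma ev_sc: "ev (vsc a x) = a * ev x" unfolding ev_def by (simp add: sum_distrib_left)
lemma ev_sub: "ev (vsub x y) = ev x - ev y" unfolding ev_def by (simp add: sum_subtractf)
lemma D_V: "c \<in> V m \<Longrightarrow> D c \<in> V m" unfolding V_def D_def by auto
lemma V_mono: "m \<le> m' \<Longrightarrow> V m \<subseteq> V m'" unfolding V_def by auto
lemma V_add: "x \<in> V m \<Longrightarrow> y \<in> V m \<Longrightarrow> vadd x y \<in> V m" unfolding V_def by auto
lemma V_sub: "x \<in> V m \<Longrightarrow> y \<in> V m \<Longrightarrow> vsub x y \<in> V m" unfolding V_def by auto
lemma V_sc: "x \<in> V m \<Longrightarrow> vsc a x \<in> V m" unfolding V_def by auto
lemma V0: "c \<in> V 0 \<Longrightarrow> c = (\<lambda>_. 0)" unfolding V_def by auto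

lemma V_split:
  assumes v: "v \<in> V (Suc m)" and z: "z \<in> V (Suc m)" and z1: "z (Suc m) = 1"
  shows "vsub v (vsc (v (Suc m)) z) \<in> V m"
  unfolding V_def
proof (intro CollectI allI impI)
  fix j assume j: "j \<notin> {1..m}"
  show "vsub v (vsc (v (Suc m)) z) j = 0"
  proof (cases "j = Suc m")
    case True then show ?thesis using z1 by simp
  next
    case False
    with j have "j \<notin> {1..Suc m}" by auto
    then have "v j = 0" "z j = 0" using v z unfolding V_def by auto
    then show ?thesis by simp
  qed
qed

lemma dec: "\<exists>y\<in>V m. \<forall>v\<in>V m. ip (vsub x y) v = 0"
proof (induction m arbitrary: x)
  case 0
  show ?case
  proof (rule bexI[of _ "\<lambda>_. 0"])
    show "\<forall>v\<in>V 0. ip (vsub x (\<lambda>_. 0)) v = 0"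
    proof
      fix v assume "v \<in> V 0"
      then have "v = (\<lambda>_. 0)" by (rule V0)
      then show "ip (vsub x (\<lambda>_. 0)) v = 0" by (simp add: ip_zero2)
    qed
    show "(\<lambda>_. 0) \<in> V 0" by (simp add: V_def)
  qed
next
  case (Suc m)
  define e :: "nat \<Rightarrow> complex" where "e = (\<lambda>j. if j = Suc m then 1 else 0)"
  obtain y1 where y1: "y1 \<in> V m" "\<forall>v\<in>V m. ip (vsub e y1) v = 0" using Suc.IH[of e] by blast
  define z where "z = vsub e y1"
  have zV: "z \<in> V (Suc m)" using y1(1) unfolding z_def e_def V_def by auto
  have z1: "z (Suc m) = 1" using y1(1) unfolding z_def e_def V_def by auto
  have zo: "\<And>v. v \<in> V m \<Longrightarrow> ip z v = 0" using y1(2) z_def by simp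
  obtain y0 where y0: "y0 \<in> V m" "\<forall>v\<in>V m. ip (vsub x y0) v = 0" using Suc.IH[of x] by blast
  define r where "r = vsub x y0"
  define \<beta> where "\<beta> = ip r z / ip z z"
  have key: "ip r z - \<beta> * ip z z = 0"
  proof (cases "ip z z = 0")
    case True
    then have "Q z = 0" unfolding Q_def by simp
    then show ?thesis using null by (simp add: \<beta>_def)
  qed (simp add: \<beta>_def)
  have yV: "vadd y0 (vsc \<beta> z) \<in> V (Suc m)"
    using y0(1) zV V_mono[of m "Suc m"] by (intro V_add V_sc) auto
  have eq: "vsub x (vadd y0 (vsc \<beta> z)) = vsub r (vsc \<beta> z)"
    unfolding r_def by (simp add: fun_eq_iff)
  show ?case
  proof (rule bexI[OF _ yV], intro ballI)
    fix v assume v: "v \<in> V (Suc m)"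
    define v' where "v' = vsub v (vsc (v (Suc m)) z)"
    have v'V: "v' \<in> V m" unfolding v'_def by (rule V_split[OF v zV z1])
    have vv: "v = vadd v' (vsc (v (Suc m)) z)" unfolding v'_def by (simp add: fun_eq_iff)
    have "ip (vsub r (vsc \<beta> z)) v = ip r v' + cnj (v (Suc m)) * ip r z - \<beta> * (ip z v' + cnj (v (Suc m)) * ip z z)"
      by (subst vv) (simp add: ip_sub1 ip_add2 ip_sc1 ip_sc2 algebra_simps)
    also have "\<dots> = cnj (v (Suc m)) * (ip r z - \<beta> * ip z z)"
    proof -
      have a: "ip r v' = 0" using y0(2) v'V unfolding r_def by simp
      have b: "ip z v' = 0" using zo[OF v'V] .
      show ?thesis by (simp add: a b algebra_simps)
    qed
    also have "\<dots> = 0" using key by simp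
    finally show "ip (vsub x (vadd y0 (vsc \<beta> z))) v = 0" unfolding eq .
  qed
qed

end
context expsys begin

definition w :: "nat \<Rightarrow> real" where "w j = 1 - 2 * Re (lam j)"
definition W :: "nat \<Rightarrow> real" where "W m = (\<Sum>j=1..m. w j)"
definition S :: "nat \<Rightarrow> real" where "S m = (\<Sum>k=1..m. w k * W (k-1))"

lemma w_pos: "j \<in> {1..n} \<Longrightarrow> w j > 0" using re[of j] by (simp add: w_def)
lemma W_nonneg: "m \<le> n \<Longrightarrow> W m \<ge> 0" unfolding W_def
  by (intro sum_nonneg) (use w_pos in \<open>fastforce\<close>)
lemma S_nonneg: "m \<le> n \<Longrightarrow> S m \<ge> 0" unfolding S_def
  by (intro sum_nonneg mult_nonneg_nonneg) (use w_pos W_nonneg in \<open>fastforce+\<close>)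
lemma W_Suc: "W (Suc m) = W m + w (Suc m)" by (simp add: W_def)
lemma S_Suc: "S (Suc m) = S m + w (Suc m) * W m" by (simp add: S_def)

lemma main:
  assumes M0: "0 \<le> M" and Mb: "\<And>j. j \<in> {1..n} \<Longrightarrow> cmod (lam j) \<le> M"
  shows "m \<le> n \<Longrightarrow> c \<in> V m \<Longrightarrow> (cmod (ev c))\<^sup>2 \<le> W m * Q c \<and> Q (D c) \<le> (M + sqrt (S m))\<^sup>2 * Q c"
proof (induction m arbitrary: c)
  case 0
  then have "c = (\<lambda>_. 0)" using V0 by auto
  then show ?case by (simp add: ev_def Q_def D_def ip_def W_def S_def)
next
  case (Suc m)
  note IH = Suc.IH
  have mn: "m \<le> n" and pn: "Suc m \<in> {1..n}" using Suc.prems by auto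
  have cV: "c \<in> V (Suc m)" using Suc.prems by simp
  define l where "l = lam (Suc m)"
  define wp where "wp = w (Suc m)"
  have wp0: "wp > 0" unfolding wp_def using w_pos[OF pn] .
  have Wm0: "W m \<ge> 0" using W_nonneg[OF mn] .
  have Sm0: "S m \<ge> 0" using S_nonneg[OF mn] .
  define e :: "nat \<Rightarrow> complex" where "e = (\<lambda>j. if j = Suc m then 1 else 0)"
  obtain y1 where y1: "y1 \<in> V m" "\<forall>v\<in>V m. ip (vsub e y1) v = 0" using dec[of m e] by blast
  define z where "z = vsub e y1"
  have zV: "z \<in> V (Suc m)" using y1(1) unfolding z_def e_def V_def by auto
  have z1: "z (Suc m) = 1" using y1(1) unfolding z_def e_def V_def by auto
  have zo: "\<And>v. v \<in> V m \<Longrightarrow> ip z v = 0" using y1(2) z_def by simp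
  have zo2: "ip v z = 0" if v: "v \<in> V m" for v
  proof -
    have "ip v z = cnj (ip z v)" using ip_sym[of z v] by simp
    then show ?thesis using zo[OF v] by simp
  qed
  have orth: "Q (vadd u (vsc \<beta> z)) = Q u + (cmod \<beta>)\<^sup>2 * Q z" if u: "u \<in> V m" for u \<beta>
    by (simp add: Q_add Q_sc ip_sc2 zo2[OF u])
  define h where "h = vsub (D z) (vsc l z)"
  have hV: "h \<in> V m"
    unfolding V_def
  proof (intro CollectI allI impI)
    fix j assume j: "j \<notin> {1..m}"
    show "h j = 0"
    proof (cases "j = Suc m")
      case True then show ?thesis by (simp add: h_def D_def l_def)
    next
      case False
      with j have "j \<notin> {1..Suc m}" by auto
      then have "z j = 0" using zV unfolding V_def by auto
      then show ?thesis by (simp add: h_def D_def)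
    qed
  qed
  have Dz: "D z = vadd h (vsc l z)" by (simp add: h_def D_def fun_eq_iff)
  have ipDzz: "ip (D z) z = l * ip z z" by (simp add: Dz ip_add1 ip_sc1 zo2[OF hV])
  have evz: "(cmod (ev z))\<^sup>2 = wp * Q z"
  proof -
    have L: "ip (D z) z + ip z (D z) = ip z z - ev z * cnj (ev z)" by (rule lyap)
    have c1: "ip z (D z) = cnj (ip (D z) z)" using ip_sym[of "D z" z] by simp
    have r1: "Re (ip (D z) z + ip z (D z)) = 2 * Re l * Q z"
      unfolding c1 ipDzz ip_real by simp
    have r2: "Re (ip z z - ev z * cnj (ev z)) = Q z - (cmod (ev z))\<^sup>2"
      unfolding complex_norm_square[symmetric] by (simp add: Q_def)
    from L r1 r2 have "2 * Re l * Q z = Q z - (cmod (ev z))\<^sup>2" by simp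
    then show ?thesis unfolding wp_def w_def l_def by (simp add: algebra_simps)
  qed
  have hip: "ip h v = - ev z * cnj (ev v)" if v: "v \<in> V m" for v
  proof -
    have "ip h v = ip (D z) v - l * ip z v" by (simp add: h_def ip_sub1 ip_sc1)
    also have "\<dots> = ip (D z) v" using zo[OF v] by simp
    also have "\<dots> = - ev z * cnj (ev v)"
      using lyap[of z v] zo[OF v] zo[OF D_V[OF v]] by (simp add: algebra_simps)
    finally show ?thesis .
  qed
  have IHh: "(cmod (ev h))\<^sup>2 \<le> W m * Q h" using IH[OF mn hV] by simp
  have Qh: "Q h \<le> wp * W m * Q z"
  proof -
    have "Q h = Re (- ev z * cnj (ev h))" using hip[OF hV] unfolding Q_def by simp
    also have "\<dots> \<le> cmod (- ev z * cnj (ev h))" by (rule complex_Re_le_cmod)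
    also have "\<dots> = cmod (ev z) * cmod (ev h)" by (simp add: norm_mult)
    finally have a: "Q h \<le> cmod (ev z) * cmod (ev h)" .
    have "(Q h)\<^sup>2 \<le> (cmod (ev z) * cmod (ev h))\<^sup>2" by (rule power_mono[OF a Q_nonneg])
    also have "\<dots> = (cmod (ev z))\<^sup>2 * (cmod (ev h))\<^sup>2" by (simp add: power_mult_distrib)
    also have "\<dots> \<le> (wp * Q z) * (W m * Q h)"
      unfolding evz by (rule mult_left_mono[OF IHh]) (use wp0 Q_nonneg in simp)
    finally have b: "Q h * Q h \<le> (wp * W m * Q z) * Q h" by (simp add: power2_eq_square algebra_simps)
    show ?thesis
    proof (cases "Q h = 0")
      case True then show ?thesis using wp0 Wm0 Q_nonneg[of z] by simp
    next
      case False
      then have "Q h > 0" using Q_nonneg[of h] by simp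
      with b show ?thesis by simp
    qed
  qed
  define \<alpha> where "\<alpha> = c (Suc m)"
  define c' where "c' = vsub c (vsc \<alpha> z)"
  have c'V: "c' \<in> V m" unfolding c'_def \<alpha>_def by (rule V_split[OF cV zV z1])
  have cc: "c = vadd c' (vsc \<alpha> z)" by (simp add: c'_def fun_eq_iff)
  have Qc: "Q c = Q c' + (cmod \<alpha>)\<^sup>2 * Q z" using orth[OF c'V] cc by simp
  have IHc: "(cmod (ev c'))\<^sup>2 \<le> W m * Q c'" "Q (D c') \<le> (M + sqrt (S m))\<^sup>2 * Q c'"
    using IH[OF mn c'V] by auto
  have P1: "(cmod (ev c))\<^sup>2 \<le> W (Suc m) * Q c"
  proof -
    have "ev c = ev c' + \<alpha> * ev z" by (subst cc) (simp add: ev_add ev_sc)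
    then have "cmod (ev c) \<le> cmod (ev c') + cmod \<alpha> * cmod (ev z)"
      by (metis norm_mult norm_triangle_ineq)
    then have "(cmod (ev c))\<^sup>2 \<le> (cmod (ev c') + cmod \<alpha> * cmod (ev z))\<^sup>2"
      by (rule power_mono) simp
    also have "\<dots> \<le> (W m + wp) * (Q c' + (cmod \<alpha>)\<^sup>2 * Q z)"
    proof (rule cs2)
      show "(cmod \<alpha> * cmod (ev z))\<^sup>2 \<le> wp * ((cmod \<alpha>)\<^sup>2 * Q z)"
        by (simp add: power_mult_distrib evz)
    qed (use IHc Wm0 wp0 Q_nonneg in auto)
    finally show ?thesis by (simp add: W_Suc Qc wp_def)
  qed
  define u where "u = vadd (D c') (vsc \<alpha> h)"
  have uV: "u \<in> V m" unfolding u_def using D_V[OF c'V] V_sc[OF hV] by (rule V_add)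
  have Dc: "D c = vadd u (vsc (\<alpha> * l) z)"
    by (simp add: u_def cc h_def D_def fun_eq_iff algebra_simps)
  have QDc: "Q (D c) = Q u + (cmod (\<alpha> * l))\<^sup>2 * Q z" using orth[OF uV] Dc by simp
  define s where "s = sqrt (S m)"
  define H where "H = sqrt (wp * W m)"
  define x where "x = sqrt (Q c')"
  define y where "y = cmod \<alpha> * sqrt (Q z)"
  have s0: "s \<ge> 0" and H0: "H \<ge> 0" and x0: "x \<ge> 0" and y0: "y \<ge> 0"
    unfolding s_def H_def x_def y_def using Sm0 Wm0 wp0 Q_nonneg[of c'] Q_nonneg[of z] by simp_all
  have su: "sqrt (Q u) \<le> (M + s) * x + H * y"
  proof -
    have "sqrt (Q u) \<le> sqrt (Q (D c')) + sqrt (Q (vsc \<alpha> h))" unfolding u_def by (rule sqrt_Q_add)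
    also have "sqrt (Q (D c')) \<le> (M + s) * x"
    proof -
      have "sqrt (Q (D c')) \<le> sqrt ((M + s)\<^sup>2 * Q c')" using IHc(2) s_def by (simp add: real_sqrt_le_mono)
      also have "\<dots> = (M + s) * x" unfolding x_def using M0 s0 by (simp add: real_sqrt_mult)
      finally show ?thesis .
    qed
    also have "sqrt (Q (vsc \<alpha> h)) \<le> H * y"
    proof -
      have "sqrt (Q (vsc \<alpha> h)) = cmod \<alpha> * sqrt (Q h)" by (simp add: Q_sc real_sqrt_mult)
      also have "\<dots> \<le> cmod \<alpha> * sqrt (wp * W m * Q z)"
        by (intro mult_left_mono real_sqrt_le_mono Qh) simp
      also have "\<dots> = H * y" unfolding H_def y_def by (simp add: real_sqrt_mult)
      finally show ?thesis .
    qed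
    finally show ?thesis by simp
  qed
  have Qu: "Q u \<le> ((M + s) * x + H * y)\<^sup>2"
  proof -
    have "Q u = (sqrt (Q u))\<^sup>2" using Q_nonneg[of u] by simp
    also have "\<dots> \<le> ((M + s) * x + H * y)\<^sup>2" by (rule power_mono[OF su]) (simp add: Q_nonneg)
    finally show ?thesis .
  qed
  have Ql: "(cmod (\<alpha> * l))\<^sup>2 * Q z \<le> M\<^sup>2 * y\<^sup>2"
  proof -
    have "(cmod (\<alpha> * l))\<^sup>2 * Q z = (cmod l)\<^sup>2 * y\<^sup>2"
      unfolding y_def using Q_nonneg[of z] by (simp add: norm_mult power_mult_distrib)
    also have "\<dots> \<le> M\<^sup>2 * y\<^sup>2"
      using Mb[OF pn] unfolding l_def by (intro mult_right_mono power_mono) simp_all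
    finally show ?thesis .
  qed
  have P2: "Q (D c) \<le> (M + sqrt (S (Suc m)))\<^sup>2 * Q c"
  proof -
    have "Q (D c) \<le> ((M + s) * x + H * y)\<^sup>2 + M\<^sup>2 * y\<^sup>2" using QDc Qu Ql by simp
    also have "\<dots> \<le> (M + sqrt (s\<^sup>2 + H\<^sup>2))\<^sup>2 * (x\<^sup>2 + y\<^sup>2)" by (rule fin_ineq[OF M0 s0 H0 x0 y0])
    also have "s\<^sup>2 + H\<^sup>2 = S (Suc m)" unfolding s_def H_def using Sm0 Wm0 wp0 by (simp add: S_Suc wp_def)
    also have "x\<^sup>2 + y\<^sup>2 = Q c" unfolding x_def y_def using Q_nonneg[of c'] Q_nonneg[of z]
      by (simp add: Qc power_mult_distrib)
    finally show ?thesis .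
  qed
  show ?case using P1 P2 by simp
qed

end


theorem theorem10p1:
  fixes n :: nat and a lam :: "nat \<Rightarrow> complex" and f :: "real \<Rightarrow> complex"
  assumes "n \<ge> 1"
    and "\<And>j. j \<in> {1..n} \<Longrightarrow> Re (lam j) < 1/2"
    and "f = (\<lambda>t. \<Sum>j=1..n. a j * exp (lam j * of_real t))"
  shows "wnorm (\<lambda>t. vector_derivative f (at t))
    \<le> ((MAX j\<in>{1..n}. cmod (lam j))
        + sqrt (\<Sum>j=1..n. (1 - 2 * Re (lam j)) * (\<Sum>k=j+1..n. (1 - 2 * Re (lam k)))))
      * wnorm f"
proof -
  interpret expsys n lam using assms(2) by unfold_locales
  define M where "M = (MAX j\<in>{1..n}. cmod (lam j))"
  have Mb: "\<And>j. j \<in> {1..n} \<Longrightarrow> cmod (lam j) \<le> M" unfolding M_def by (intro Max_ge) auto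
  have M0: "0 \<le> M" using Mb[of 1] assms(1) by (meson atLeastAtMost_iff le_refl norm_ge_zero order_trans)
  define c where "c = (\<lambda>j. if j \<in> {1..n} then a j else 0)"
  have cV: "c \<in> V n" by (simp add: V_def c_def)
  have fF: "f = F c" unfolding assms(3) F_def c_def by (intro ext sum.cong) auto
  have df: "vector_derivative f (at t) = F (D c) t" for t
  proof -
    have "((\<lambda>t. \<Sum>j\<in>{1..n}. c j * exp (lam j * of_real t)) has_vector_derivative
           (\<Sum>j\<in>{1..n}. c j * (lam j * exp (lam j * of_real t)))) (at t)"
      by (intro has_vector_derivative_sum has_vector_derivative_mult_right dexp)
    then have "vector_derivative f (at t) = (\<Sum>j\<in>{1..n}. c j * (lam j * exp (lam j * of_real t)))"
      unfolding fF F_def by (rule vector_derivative_at)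
    also have "\<dots> = F (D c) t" unfolding F_def D_def by (simp add: ac_simps)
    finally show ?thesis .
  qed
  have wn1: "wnorm f = sqrt (Q c)" unfolding wnorm_def fF int_F ..
  have wn2: "wnorm (\<lambda>t. vector_derivative f (at t)) = sqrt (Q (D c))"
    unfolding wnorm_def df int_F ..
  have Sn: "(\<Sum>j=1..n. (1 - 2 * Re (lam j)) * (\<Sum>k=j+1..n. (1 - 2 * Re (lam k)))) = S n"
    using sum_swap_tri[of w n] unfolding S_def W_def w_def by simp
  have key: "Q (D c) \<le> (M + sqrt (S n))\<^sup>2 * Q c"
    using main[OF M0 Mb le_refl cV] by simp
  have "sqrt (Q (D c)) \<le> sqrt ((M + sqrt (S n))\<^sup>2 * Q c)" by (rule real_sqrt_le_mono[OF key])
  also have "\<dots> = (M + sqrt (S n)) * sqrt (Q c)"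
    using M0 S_nonneg[of n] by (simp add: real_sqrt_mult)
  finally show ?thesis unfolding wn1 wn2 Sn M_def .
qed

end
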